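(* Let $J$ be a complex structure on a $2$-step nilpotent real Lie algebra $\mathfrak{n}$ with center $\mathfrak{z}$ and commutator ideal $\mathfrak{n}'$. If $\mathfrak{z}_0$ is an ideal of $\mathfrak{n}$ with $\mathfrak{n}'\subset\mathfrak{z}_0\subset\mathfrak{z}$, then $J\mathfrak{z}_0$ is an abelian ideal of $\mathfrak{n}$.
   Context: A complex structure on a real Lie algebra $\mathfrak{g}$ is a linear map $J:\mathfrak{g}\to\mathfrak{g}$ with $J^2=-I$ and $N_J(x,y):=[x,y]+J([Jx,y]+[x,Jy])-[Jx,Jy]=0$ for all $x,y\in\mathfrak{g}$. A Lie algebra $\mathfrak{n}$ is $2$-step nilpotent if it is non-abelian and $\mathfrak{n}'=[\mathfrak{n},\mathfrak{n}]\subset\mathfrak{z}$. *)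

theory Defs
  imports Main "HOL.Real_Vector_Spaces"
begin

definition lie_algebra :: "('a::real_vector \<Rightarrow> 'a \<Rightarrow> 'a) \<Rightarrow> bool" where
  "lie_algebra br \<longleftrightarrow>
     (\<forall>x. linear (br x)) \<and> (\<forall>y. linear (\<lambda>x. br x y)) \<and>
     (\<forall>x. br x x = 0) \<and>
     (\<forall>x y z. br x (br y z) + br y (br z x) + br z (br x y) = 0)"

definition complex_structure :: "('a::real_vector \<Rightarrow> 'a \<Rightarrow> 'a) \<Rightarrow> ('a \<Rightarrow> 'a) \<Rightarrow> bool" where
  "complex_structure br J \<longleftrightarrow> linear J \<and> (\<forall>x. J (J x) = - x) \<and>
     (\<forall>x y. br x y + J (br (J x) y + br x (J y)) - br (J x) (J y) = 0)"

definition lie_center :: "('a::real_vector \<Rightarrow> 'a \<Rightarrow> 'a) \<Rightarrow> 'a set" where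
  "lie_center br = {z. \<forall>x. br x z = 0}"

definition commutator_ideal :: "('a::real_vector \<Rightarrow> 'a \<Rightarrow> 'a) \<Rightarrow> 'a set" where
  "commutator_ideal br = span {br x y | x y. True}"

definition lie_ideal :: "('a::real_vector \<Rightarrow> 'a \<Rightarrow> 'a) \<Rightarrow> 'a set \<Rightarrow> bool" where
  "lie_ideal br S \<longleftrightarrow> subspace S \<and> (\<forall>x y. y \<in> S \<longrightarrow> br x y \<in> S)"

definition abelian_ideal :: "('a::real_vector \<Rightarrow> 'a \<Rightarrow> 'a) \<Rightarrow> 'a set \<Rightarrow> bool" where
  "abelian_ideal br S \<longleftrightarrow> lie_ideal br S \<and> (\<forall>x\<in>S. \<forall>y\<in>S. br x y = 0)"

definition two_step_nilpotent :: "('a::real_vector \<Rightarrow> 'a \<Rightarrow> 'a) \<Rightarrow> bool" where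
  "two_step_nilpotent br \<longleftrightarrow> (\<exists>x y. br x y \<noteq> 0) \<and> commutator_ideal br \<subseteq> lie_center br"

end

theory Submission
  imports Defs
begin

lemma br_antisym:
  assumes "lie_algebra br"
  shows "br x y = - br y x"
proof -
  from assms have l1: "linear (br u)" and l2: "linear (\<lambda>v. br v w)" and al: "br v v = 0" for u v w
    unfolding lie_algebra_def by auto
  have "0 = br (x+y) (x+y)" using al by simp
  also have "\<dots> = br x (x+y) + br y (x+y)" using linear_add[OF l2] by simp
  also have "\<dots> = br x x + br x y + br y x + br y y" using linear_add[OF l1] by simp
  also have "\<dots> = br x y + br y x" using al by simp
  finally show ?thesis by (simp add: eq_neg_iff_add_eq_0)
qed

theorem mainTheorem3:
  fixes br :: "'a::real_vector \<Rightarrow> 'a \<Rightarrow> 'a" and J :: "'a \<Rightarrow> 'a" and z0 :: "'a set"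
  assumes "lie_algebra br"
    and "two_step_nilpotent br"
    and "complex_structure br J"
    and "lie_ideal br z0"
    and "commutator_ideal br \<subseteq> z0"
    and "z0 \<subseteq> lie_center br"
  shows "abelian_ideal br (J ` z0)"
proof -
  have linJ: "linear J" and JJ: "\<And>x. J (J x) = - x"
    and N: "\<And>x y. br x y + J (br (J x) y + br x (J y)) - br (J x) (J y) = 0"
    using assms(3) unfolding complex_structure_def by auto
  have sub: "subspace z0" using assms(4) unfolding lie_ideal_def by auto
  have cen: "\<And>z x. z \<in> z0 \<Longrightarrow> br x z = 0" using assms(6) unfolding lie_center_def by auto
  have comm: "br x y \<in> z0" for x y
  proof -
    have "br x y \<in> {br x y | x y. True}" by blast
    hence "br x y \<in> span {br x y | x y. True}" by (rule span_base)
    thus ?thesis using assms(5) unfolding commutator_ideal_def by blast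
  qed
  have "subspace (J ` z0)" using linear_subspace_image[OF linJ sub] .
  moreover have "br x y \<in> J ` z0" if yJ: "y \<in> J ` z0" for x y
  proof -
    obtain z where z: "z \<in> z0" "y = J z" using yJ by (auto simp: image_iff)
    have "br x z + J (br (J x) z + br x (J z)) - br (J x) (J z) = 0" by (rule N)
    hence e: "J (br x (J z)) = br (J x) (J z)" using cen[OF z(1)] by simp
    have "br x (J z) = - J (J (br x (J z)))" using JJ by simp
    also have "\<dots> = J (- br (J x) (J z))" using e linear_neg[OF linJ] by simp
    finally have "br x y = J (- br (J x) (J z))" using z by simp
    moreover have "- br (J x) (J z) \<in> z0" using comm subspace_neg[OF sub] by blast
    ultimately show ?thesis by blast
  qed
  moreover have "br x y = 0" if xyJ: "x \<in> J ` z0" "y \<in> J ` z0" for x y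
  proof -
    obtain z w where zw: "z \<in> z0" "w \<in> z0" "x = J z" "y = J w" using xyJ by (auto simp: image_iff)
    have "br z w + J (br (J z) w + br z (J w)) - br (J z) (J w) = 0" by (rule N)
    moreover have "br z (J w) = 0" using br_antisym[OF assms(1), of z "J w"] cen[OF zw(1)] by simp
    moreover have "J 0 = 0" using linear_0[OF linJ] .
    ultimately show ?thesis using cen[OF zw(2)] zw by simp
  qed
  ultimately show ?thesis unfolding abelian_ideal_def lie_ideal_def by blast
qed

end
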